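(* Let $\mathcal P$ be the set of real polynomials $P\in\mathbb R[X]$ with $\int_0^\infty P(t)e^{-2t}\,dt=1$, and let $\mathcal P_+=\{P\in\mathcal P: P(t)\ge0\ \forall t\ge0\}$. Then for $P\in\mathcal P_+$ the following are equivalent: (i) $P$ is an extreme point of the convex set $\mathcal P_+$; (ii) $P(t)=c\,t^k\prod_{i=1}^{\ell}(t-\lambda_i)^2$ for some $k,\ell\in\mathbb N$, $\lambda_i>0$ for all $i$, and a normalization constant $c>0$.
   Context: An extreme point of a convex set $\mathcal C$ is a point $a\in\mathcal C$ such that $a=\frac12(x+y)$ with $x,y\in\mathcal C$ implies $x=y=a$. *)

theory Defs
  imports "HOL-Analysis.Analysis" "HOL-Computational_Algebra.Polynomial"
begin

definition normPolys :: "real poly set" where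
  "normPolys = {P. ((\<lambda>t. poly P t * exp (-2 * t)) has_integral 1) {0..}}"

definition normPolys_pos :: "real poly set" where
  "normPolys_pos = {P \<in> normPolys. \<forall>t\<ge>0. poly P t \<ge> 0}"

definition is_extreme_point :: "real poly set \<Rightarrow> real poly \<Rightarrow> bool" where
  "is_extreme_point C a \<longleftrightarrow> a \<in> C \<and>
     (\<forall>x\<in>C. \<forall>y\<in>C. a = smult (1/2) (x + y) \<longrightarrow> x = a \<and> y = a)"

end

theory Submission
  imports Defs
begin


lemma poly_tend_within: "(poly (Q::real poly) \<longlongrightarrow> poly Q a) (at a within S)"
  by (intro tendsto_intros)

lemma nonneg_at0:
  fixes Q :: "real poly"
  assumes "\<forall>t>0. poly Q t \<ge> 0"
  shows "poly Q 0 \<ge> 0"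
proof (rule tendsto_lowerbound[OF poly_tend_within[of Q 0 "{0<..}"]])
  show "\<forall>\<^sub>F x in at_right 0. 0 \<le> poly Q x"
    using eventually_at_right_less[of "0::real"] by eventually_elim (use assms in auto)
qed simp

lemma nonneg_at:
  fixes Q :: "real poly"
  assumes "lam > 0" "\<forall>t>0. t \<noteq> lam \<longrightarrow> poly Q t \<ge> 0"
  shows "poly Q lam \<ge> 0"
proof (rule tendsto_lowerbound[OF poly_tend_within[of Q lam "{lam<..}"]])
  show "\<forall>\<^sub>F x in at_right lam. 0 \<le> poly Q x"
    using eventually_at_right_less[of "lam::real"] by eventually_elim (use assms in auto)
qed simp

lemma sign_change:
  fixes Q :: "real poly"
  assumes "lam > 0" "\<forall>t>0. poly ([:-lam,1:] * Q) t \<ge> 0"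
  shows "poly Q lam = 0"
proof -
  have "poly Q lam \<ge> 0"
  proof (rule tendsto_lowerbound[OF poly_tend_within[of Q lam "{lam<..}"]])
    show "\<forall>\<^sub>F x in at_right lam. 0 \<le> poly Q x"
      using eventually_at_right_less[of "lam::real"] 
    proof eventually_elim
      case (elim x)
      then have "0 \<le> (x - lam) * poly Q x" using assms by (auto simp: algebra_simps)
      then show ?case using elim by (simp add: zero_le_mult_iff)
    qed
  qed simp
  moreover have "poly Q lam \<le> 0"
  proof (rule tendsto_upperbound[OF poly_tend_within[of Q lam "{..<lam}"]])
    show "\<forall>\<^sub>F x in at_left lam. poly Q x \<le> 0"
      using eventually_at_left_real[OF assms(1)]
    proof eventually_elim
      case (elim x)
      then have "0 \<le> (x - lam) * poly Q x" using assms by (auto simp: algebra_simps)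
      then show ?case using elim by (simp add: zero_le_mult_iff)
    qed
  qed simp
  ultimately show ?thesis by simp
qed

lemma poly_big:
  fixes p :: "real poly"
  assumes "degree p > 0"
  shows "\<forall>\<^sub>F t in at_top. \<bar>poly p t\<bar> \<ge> M"
proof -
  have "filterlim (poly p) at_infinity at_top"
    using filterlim_mono[OF filterlim_poly_at_infinity[OF assms] order_refl at_top_le_at_infinity] .
  then have "filterlim (\<lambda>x. norm (poly p x)) at_top at_top"
    by (rule filterlim_at_infinity_imp_norm_at_top)
  then show ?thesis by (simp add: filterlim_at_top)
qed

lemma prod_upd:
  "(\<Prod>i<Suc l. [:- ((lam(l:=a)) i), 1:] ^ 2) = (\<Prod>i<l. [:- lam i, 1:] ^ 2) * [:-a,1:]^2"
proof -
  have "(\<Prod>i<l. [:- ((lam(l:=a)) i), 1:] ^ 2) = (\<Prod>i<l. [:- lam i, 1:] ^ 2)"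
    by (rule prod.cong) auto
  then show ?thesis by simp
qed

lemma factor:
  fixes Q :: "real poly"
  assumes "Q \<noteq> 0" "\<forall>t>0. poly Q t \<ge> 0"
  shows "\<exists>k (l::nat) lam R. (\<forall>i<l. lam i > 0) \<and> (\<forall>t\<ge>0. poly R t > 0) \<and>
           Q = [:0,1:]^k * (\<Prod>i<l. [:-lam i,1:]^2) * R"
  using assms
proof (induction "degree Q" arbitrary: Q rule: less_induct)
  case less
  show ?case
  proof (cases "\<exists>t\<ge>0. poly Q t = 0")
    case False
    have "\<forall>t\<ge>0. poly Q t > 0"
    proof (intro allI impI)
      fix t :: real assume "t \<ge> 0"
      show "poly Q t > 0"
      proof (cases "t = 0")
        case True then show ?thesis using nonneg_at0[of Q] less.prems False by force
      next
        case False then show ?thesis using less.prems \<open>t\<ge>0\<close> \<open>\<not> (\<exists>t\<ge>0. poly Q t = 0)\<close>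
          by (metis order_le_less)
      qed
    qed
    then show ?thesis
      apply -
      apply (rule exI[of _ "0::nat"], rule exI[of _ "0::nat"], rule exI[of _ "\<lambda>_::nat. 0::real"], rule exI[of _ Q])
      by simp
  next
    case True
    then obtain a where a: "a \<ge> 0" "poly Q a = 0" by blast
    show ?thesis
    proof (cases "a = 0")
      case True
      have "[:-0,1:] dvd Q" using a True poly_eq_0_iff_dvd by metis
      then obtain Q' where Q': "Q = [:0,1:] * Q'" by auto
      have nz: "Q' \<noteq> 0" using Q' less.prems by auto
      have deg: "degree Q' < degree Q" using Q' nz by (simp add: degree_mult_eq)
      have "\<forall>t>0. poly Q' t \<ge> 0"
      proof (intro allI impI)
        fix t :: real assume "t > 0"
        have "poly Q t = t * poly Q' t" using Q' by simp
        then have "0 \<le> t * poly Q' t" using less.prems \<open>t>0\<close> by metis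
        then show "poly Q' t \<ge> 0" using \<open>t>0\<close> by (simp add: zero_le_mult_iff)
      qed
      then obtain k and l :: nat and lam R where R: "(\<forall>i<l. lam i > 0)" "(\<forall>t\<ge>0. poly R t > 0)"
           "Q' = [:0,1:]^k * (\<Prod>i<l. [:-lam i,1:]^2) * R"
        using less.hyps[OF deg nz] by blast
      show ?thesis
      proof -
        have "Q = [:0,1:]^Suc k * (\<Prod>i<l. [:-lam i,1:]^2) * R"
          by (simp only: R Q' power_Suc mult.assoc)
        then show ?thesis using R by (intro exI[of _ "Suc k"] exI[of _ l] exI[of _ lam] exI[of _ R] conjI) auto
      qed
    next
      case False
      with a have apos: "a > 0" by simp
      have "[:-a,1:] dvd Q" using a poly_eq_0_iff_dvd by metis
      then obtain Q1 where Q1: "Q = [:-a,1:] * Q1" by auto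
      have "poly Q1 a = 0" using sign_change[OF apos, of Q1] less.prems Q1 by simp
      then have "[:-a,1:] dvd Q1" using poly_eq_0_iff_dvd by metis
      then obtain Q2 where Q2: "Q1 = [:-a,1:] * Q2" by auto
      have QQ: "Q = [:-a,1:]^2 * Q2" using Q1 Q2 by (simp only: power2_eq_square mult.assoc)
      have nz: "Q2 \<noteq> 0" using QQ less.prems by auto
      have deg: "degree Q2 < degree Q" using QQ nz by (simp add: degree_mult_eq degree_power_eq)
      have ne: "\<forall>t>0. t \<noteq> a \<longrightarrow> poly Q2 t \<ge> 0"
      proof (intro allI impI)
        fix t :: real assume "t > 0" "t \<noteq> a"
        have "poly Q t = (t - a)^2 * poly Q2 t" using QQ by simp
        then have "0 \<le> (t - a)^2 * poly Q2 t" using less.prems \<open>t>0\<close> by metis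
        moreover have "(t - a)^2 > 0" using \<open>t \<noteq> a\<close> by simp
        ultimately show "poly Q2 t \<ge> 0" by (simp add: zero_le_mult_iff)
      qed
      have "\<forall>t>0. poly Q2 t \<ge> 0" using ne nonneg_at[OF apos ne] by metis
      then obtain k and l :: nat and lam R where R: "(\<forall>i<l. lam i > 0)" "(\<forall>t\<ge>0. poly R t > 0)"
           "Q2 = [:0,1:]^k * (\<Prod>i<l. [:-lam i,1:]^2) * R"
        using less.hyps[OF deg nz] by blast
      show ?thesis
      proof -
        have "Q = [:0,1:]^k * (\<Prod>i<Suc l. [:-((lam(l:=a)) i),1:]^2) * R"
          by (simp only: R QQ prod_upd ac_simps)
        moreover have "\<forall>i<Suc l. (lam(l:=a)) i > 0" using R apos by (auto simp: less_Suc_eq)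
        ultimately show ?thesis using R by (intro exI[of _ k] exI[of _ "Suc l"] exI[of _ "lam(l:=a)"] exI[of _ R] conjI) auto
      qed
    qed
  qed
qed

lemma D0:
  fixes x H :: "real poly"
  assumes "\<forall>t>0. 0 \<le> poly x t \<and> poly x t \<le> poly ([:0,1:] * H) t"
  shows "\<exists>x'. x = [:0,1:] * x' \<and> (\<forall>t>0. 0 \<le> poly x' t \<and> poly x' t \<le> poly H t)"
proof -
  have a: "poly x 0 \<ge> 0" using nonneg_at0[of x] assms by auto
  have "poly ([:0,1:] * H - x) 0 \<ge> 0" using nonneg_at0[of "[:0,1:] * H - x"] assms by auto
  then have "poly x 0 = 0" using a by simp
  then have "[:-0,1:] dvd x" using poly_eq_0_iff_dvd by metis
  then obtain x' where x': "x = [:0,1:] * x'" by auto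
  have "\<forall>t>0. 0 \<le> poly x' t \<and> poly x' t \<le> poly H t"
  proof (intro allI impI)
    fix t :: real assume t: "t > 0"
    have e1: "poly x t = t * poly x' t" using x' by simp
    have e2: "poly ([:0,1:] * H) t = t * poly H t" by simp
    have "0 \<le> t * poly x' t" "t * poly x' t \<le> t * poly H t" using assms t e1 e2 by metis+
    then show "0 \<le> poly x' t \<and> poly x' t \<le> poly H t" using t
      by (simp add: zero_le_mult_iff)
  qed
  then show ?thesis using x' by blast
qed

lemma D1:
  fixes H :: "real poly"
  shows "\<forall>t>0. 0 \<le> poly x t \<and> poly x t \<le> poly ([:0,1:]^k * H) t \<Longrightarrow>
    \<exists>x'. x = [:0,1:]^k * x' \<and> (\<forall>t>0. 0 \<le> poly x' t \<and> poly x' t \<le> poly H t)"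
proof (induction k arbitrary: x)
  case 0
  then show ?case by auto
next
  case (Suc k)
  have e: "[:0,1:]^Suc k * H = [:0,1:] * ([:0,1:]^k * H)" by (simp only: power_Suc mult.assoc)
  have h: "\<forall>t>0. 0 \<le> poly x t \<and> poly x t \<le> poly ([:0,1:] * ([:0,1:]^k * H)) t"
    unfolding e[symmetric] by (rule Suc.prems)
  obtain x1 where x1: "x = [:0,1:] * x1" "\<forall>t>0. 0 \<le> poly x1 t \<and> poly x1 t \<le> poly ([:0,1:]^k * H) t"
    using D0[OF h] by blast
  obtain x2 where x2: "x1 = [:0,1:]^k * x2" "\<forall>t>0. 0 \<le> poly x2 t \<and> poly x2 t \<le> poly H t"
    using Suc.IH[OF x1(2)] by blast
  have "x = [:0,1:]^Suc k * x2" using x1 x2 by (simp only: power_Suc mult.assoc)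
  then show ?case using x2 by blast
qed

lemma D3:
  fixes x H :: "real poly"
  assumes lam: "lam > 0" and "\<forall>t>0. 0 \<le> poly x t \<and> poly x t \<le> poly ([:-lam,1:]^2 * H) t"
  shows "\<exists>x'. x = [:-lam,1:]^2 * x' \<and> (\<forall>t>0. 0 \<le> poly x' t \<and> poly x' t \<le> poly H t)"
proof -
  have "poly x lam \<le> poly ([:-lam,1:]^2 * H) lam" "poly x lam \<ge> 0" using assms(2) lam by blast+
  moreover have "poly ([:-lam,1:]^2 * H) lam = 0" by simp
  ultimately have "poly x lam = 0" by simp
  then have "[:-lam,1:] dvd x" using poly_eq_0_iff_dvd by metis
  then obtain x1 where x1: "x = [:-lam,1:] * x1" by auto
  have "poly x1 lam = 0" using sign_change[OF lam, of x1] assms x1 by auto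
  then have "[:-lam,1:] dvd x1" using poly_eq_0_iff_dvd by metis
  then obtain x2 where x2: "x1 = [:-lam,1:] * x2" by auto
  have xx: "x = [:-lam,1:]^2 * x2" using x1 x2 by (simp only: power2_eq_square mult.assoc)
  have ne: "\<forall>t>0. t \<noteq> lam \<longrightarrow> 0 \<le> poly x2 t \<and> poly x2 t \<le> poly H t"
  proof (intro allI impI)
    fix t :: real assume t: "t > 0" "t \<noteq> lam"
    have sq: "(t - lam)^2 > 0" using t by simp
    have e1: "poly x t = (t - lam)^2 * poly x2 t" using xx by simp
    have e2: "poly ([:-lam,1:]^2 * H) t = (t - lam)^2 * poly H t" by simp
    have "0 \<le> (t - lam)^2 * poly x2 t" "(t - lam)^2 * poly x2 t \<le> (t - lam)^2 * poly H t"
      using assms(2) t e1 e2 by metis+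
    then show "0 \<le> poly x2 t \<and> poly x2 t \<le> poly H t" using sq
      by (simp add: zero_le_mult_iff)
  qed
  have "poly x2 lam \<ge> 0" using nonneg_at[OF lam, of x2] ne by auto
  moreover have "poly (H - x2) lam \<ge> 0" using nonneg_at[OF lam, of "H - x2"] ne by auto
  ultimately have "\<forall>t>0. 0 \<le> poly x2 t \<and> poly x2 t \<le> poly H t" using ne by auto
  then show ?thesis using xx by blast
qed

lemma D2:
  fixes H :: "real poly" and lam :: "nat \<Rightarrow> real"
  shows "\<forall>i<l. lam i > 0 \<Longrightarrow> \<forall>t>0. 0 \<le> poly x t \<and> poly x t \<le> poly ((\<Prod>i<l. [:-lam i,1:]^2) * H) t \<Longrightarrow>
    \<exists>x'. x = (\<Prod>i<l. [:-lam i,1:]^2) * x' \<and> (\<forall>t>0. 0 \<le> poly x' t \<and> poly x' t \<le> poly H t)"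
proof (induction l arbitrary: x H)
  case 0
  then show ?case by auto
next
  case (Suc l)
  have e: "(\<Prod>i<Suc l. [:-lam i,1:]^2) * H = (\<Prod>i<l. [:-lam i,1:]^2) * ([:-lam l,1:]^2 * H)"
    by (simp only: prod.lessThan_Suc mult.assoc)
  have h: "\<forall>t>0. 0 \<le> poly x t \<and> poly x t \<le> poly ((\<Prod>i<l. [:-lam i,1:]^2) * ([:-lam l,1:]^2 * H)) t"
    unfolding e[symmetric] by (rule Suc.prems(2))
  have l: "\<forall>i<l. lam i > 0" using Suc.prems(1) by auto
  obtain x1 where x1: "x = (\<Prod>i<l. [:-lam i,1:]^2) * x1" "\<forall>t>0. 0 \<le> poly x1 t \<and> poly x1 t \<le> poly ([:-lam l,1:]^2 * H) t"
    using Suc.IH[OF l h] by blast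
  obtain x2 where x2: "x1 = [:-lam l,1:]^2 * x2" "\<forall>t>0. 0 \<le> poly x2 t \<and> poly x2 t \<le> poly H t"
    using D3[OF _ x1(2)] Suc.prems(1) by blast
  have "x = (\<Prod>i<Suc l. [:-lam i,1:]^2) * x2" using x1 x2 by (simp only: prod.lessThan_Suc mult.assoc)
  then show ?case using x2 by blast
qed

lemma bounded_const:
  fixes p :: "real poly"
  assumes "\<forall>t>0. 0 \<le> poly p t \<and> poly p t \<le> C"
  shows "degree p = 0"
proof (rule ccontr)
  assume "degree p \<noteq> 0"
  then have "\<forall>\<^sub>F t in at_top. \<bar>poly p t\<bar> \<ge> \<bar>C\<bar> + 1" using poly_big[of p] by auto
  then obtain N where N: "\<forall>t\<ge>N. \<bar>poly p t\<bar> \<ge> \<bar>C\<bar> + 1" by (auto simp: eventually_at_top_linorder)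
  have "\<bar>poly p (max N 1)\<bar> \<ge> \<bar>C\<bar> + 1" using N by auto
  moreover have "0 \<le> poly p (max N 1) \<and> poly p (max N 1) \<le> C" using assms[rule_format, of "max N 1"] by simp
  ultimately show False by linarith
qed

lemma lower_bound:
  fixes R :: "real poly"
  assumes pos: "\<forall>t\<ge>0. poly R t > 0" and deg: "degree R > 0"
  shows "\<exists>m>0. \<forall>t\<ge>0. poly R t \<ge> m"
proof -
  have "\<forall>\<^sub>F t in at_top. \<bar>poly R t\<bar> \<ge> 1" using poly_big[OF deg] by auto
  then obtain N where N: "\<forall>t\<ge>N. \<bar>poly R t\<bar> \<ge> 1" unfolding eventually_at_top_linorder by blast
  have c: "continuous_on {0..max N 0} (\<lambda>t. poly R t)" by (rule continuous_on_poly[OF continuous_on_id])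
  obtain x0 where x0: "x0 \<in> {0..max N 0}" "\<forall>y\<in>{0..max N 0}. poly R x0 \<le> poly R y"
    using continuous_attains_inf[OF compact_Icc _ c] by (metis atLeastAtMost_iff empty_iff max.cobounded2 order_refl)
  have "poly R x0 > 0" using pos x0(1) by simp
  moreover have "\<forall>t\<ge>0. poly R t \<ge> min 1 (poly R x0)"
  proof (intro allI impI)
    fix t :: real assume t: "t \<ge> 0"
    show "poly R t \<ge> min 1 (poly R x0)"
    proof (cases "t \<le> max N 0")
      case True then have "poly R x0 \<le> poly R t" using x0(2) t by auto
      then show ?thesis by (metis min.coboundedI2)
    next
      case False then have "\<bar>poly R t\<bar> \<ge> 1" using N by auto
      then have "poly R t \<ge> 1" using pos[rule_format, OF t] by simp
      then show ?thesis by (metis min.coboundedI1)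
    qed
  qed
  moreover have "min 1 (poly R x0) > 0" using calculation(1) by simp
  ultimately show ?thesis by blast
qed




lemma B_nonneg:
  fixes lam :: "nat \<Rightarrow> real"
  shows "t \<ge> 0 \<Longrightarrow> poly ([:0,1:]^k * (\<Prod>i<l. [:-lam i,1:]^2)) t \<ge> 0"
  by (simp add: poly_prod prod_nonneg)

lemma scale_int:
  fixes P B :: "real poly"
  assumes "((\<lambda>t. poly P t * exp (-2 * t)) has_integral 1) {0..}" "P = smult c B" "c \<noteq> 0"
  shows "((\<lambda>t. poly B t * exp (-2 * t)) has_integral (1/c)) {0..}"
proof -
  have "((\<lambda>t. (1/c) * (poly P t * exp (-2 * t))) has_integral ((1/c) * 1)) {0..}"
    by (rule has_integral_mult_right[OF assms(1)])
  moreover have "(\<lambda>t. (1/c) * (poly P t * exp (-2 * t))) = (\<lambda>t. poly B t * exp (-2 * t))"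
  proof
    fix t :: real
    have "poly P t = c * poly B t" using assms(2) by simp
    then show "(1/c) * (poly P t * exp (-2 * t)) = poly B t * exp (-2 * t)" using assms(3) by simp
  qed
  ultimately show ?thesis by simp
qed

lemma P_nz:
  assumes "((\<lambda>t. poly P t * exp (-2 * t)) has_integral 1) {0..}"
  shows "P \<noteq> 0"
proof
  assume "P = 0"
  then have h: "((\<lambda>t. 0) has_integral 1) {0::real..}" using assms by simp
  have "(0::real) = 1" by (rule has_integral_unique[OF has_integral_0 h])
  then show False by simp
qed

theorem lemma9:
  fixes P :: "real poly"
  assumes "P \<in> normPolys_pos"
  shows "is_extreme_point normPolys_pos P \<longleftrightarrow>
    (\<exists>(c::real) (k::nat) (l::nat) (lam::nat \<Rightarrow> real).
        c > 0 \<and> (\<forall>i<l. lam i > 0) \<and>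
        P = smult c ([:0, 1:] ^ k * (\<Prod>i<l. [:- lam i, 1:] ^ 2)))"
proof -
  have Pint: "((\<lambda>t. poly P t * exp (-2 * t)) has_integral 1) {0..}"
    and Ppos: "\<forall>t\<ge>0. poly P t \<ge> 0"
    using assms by (auto simp: normPolys_pos_def normPolys_def)
  have P0: "P \<noteq> 0" by (rule P_nz[OF Pint])
  have Ppos': "\<forall>t>0. poly P t \<ge> 0" using Ppos by simp
  show ?thesis
  proof
    assume ext: "is_extreme_point normPolys_pos P"
    obtain k and l :: nat and lam R where R: "\<forall>i<l. lam i > 0" "\<forall>t\<ge>0. poly R t > 0"
      and PBR0: "P = [:0,1:]^k * (\<Prod>i<l. [:-lam i,1:]^2) * R"
      using factor[OF P0 Ppos'] by blast
    define B where "B = [:0,1:]^k * (\<Prod>i<l. [:-lam i,1:]^2)"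
    have PBR: "P = B * R" using PBR0 B_def by simp
    have Bpos: "\<forall>t\<ge>0. poly B t \<ge> 0" unfolding B_def using B_nonneg by blast
    show "\<exists>(c::real) (k::nat) (l::nat) (lam::nat \<Rightarrow> real).
        c > 0 \<and> (\<forall>i<l. lam i > 0) \<and>
        P = smult c ([:0, 1:] ^ k * (\<Prod>i<l. [:- lam i, 1:] ^ 2))"
    proof (cases "degree R = 0")
      case True
      then have "R = [:coeff R 0:]" using degree_0_id by metis
      then have "P = B * [:coeff R 0:]" using PBR by metis
      then have "P = smult (coeff R 0) B" by simp
      moreover have "coeff R 0 > 0" using R(2) by (simp flip: poly_0_coeff_0)
      ultimately have conj: "coeff R 0 > 0 \<and> (\<forall>i<l. lam i > 0) \<and> P = smult (coeff R 0) ([:0, 1:] ^ k * (\<Prod>i<l. [:- lam i, 1:] ^ 2))"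
        using R(1) unfolding B_def by simp
      show ?thesis
        by (rule exI[of _ "coeff R 0"], rule exI[of _ k], rule exI[of _ l], rule exI[of _ lam]) (rule conj)
    next
      case False
      then obtain m where m: "m > 0" "\<forall>t\<ge>0. poly R t \<ge> m" using lower_bound[OF R(2)] by auto
      let ?e = "\<lambda>t::real. exp (-2 * t)"
      have Bint: "(\<lambda>t. poly B t * ?e t) integrable_on {0..}"
      proof -
        have g: "(\<lambda>t. (1/m) * (poly P t * ?e t)) integrable_on {0..}"
          using has_integral_mult_right[OF Pint] by blast
        have "(\<lambda>t. poly B t * ?e t) absolutely_integrable_on {0..}"
        proof (rule measurable_bounded_by_integrable_imp_absolutely_integrable[OF _ _ g])
          show "(\<lambda>t. poly B t * ?e t) \<in> borel_measurable (lebesgue_on {0..})"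
            by (intro continuous_imp_measurable_on_sets_lebesgue continuous_intros) auto
          show "{0::real..} \<in> sets lebesgue" by simp
          fix t :: real assume t: "t \<in> {0..}"
          have "poly B t * m \<le> poly B t * poly R t" using Bpos m t by (auto intro!: mult_left_mono)
          then have "poly B t \<le> (1/m) * poly P t" using m PBR by (simp add: field_simps)
          have "norm (poly B t * ?e t) = poly B t * ?e t" using Bpos t by simp
          also have "\<dots> \<le> ((1/m) * poly P t) * ?e t"
            by (rule mult_right_mono[OF \<open>poly B t \<le> (1/m) * poly P t\<close>]) simp
          finally show "norm (poly B t * ?e t) \<le> (1/m) * (poly P t * ?e t)" by (simp only: mult.assoc)
        qed
        then show ?thesis unfolding absolutely_integrable_on_def by blast
      qed
      define I where "I = integral {0..} (\<lambda>t. poly B t * ?e t)"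
      have BI: "((\<lambda>t. poly B t * ?e t) has_integral I) {0..}" using Bint I_def by blast
      have I0: "I \<ge> 0" using has_integral_nonneg[OF BI] Bpos by auto
      define D where "D = smult I P - B"
      have DI: "((\<lambda>t. poly D t * ?e t) has_integral 0) {0..}"
      proof -
        have "((\<lambda>t. I * (poly P t * ?e t) - poly B t * ?e t) has_integral (I * 1 - I)) {0..}"
          by (intro has_integral_diff has_integral_mult_right Pint BI)
        then show ?thesis by (simp add: D_def algebra_simps)
      qed
      define \<epsilon> where "\<epsilon> = min m (1 / (I + 1))"
      have ep: "\<epsilon> > 0" "\<epsilon> \<le> m" "\<epsilon> * I \<le> 1" using m I0
        by (auto simp: \<epsilon>_def min_def field_simps)
      define x where "x = P + smult \<epsilon> D"
      define y where "y = P - smult \<epsilon> D"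
      have px: "poly x t = poly B t * ((1 + \<epsilon> * I) * poly R t - \<epsilon>)" for t
        by (simp add: x_def D_def PBR algebra_simps)
      have py: "poly y t = poly B t * ((1 - \<epsilon> * I) * poly R t + \<epsilon>)" for t
        by (simp add: y_def D_def PBR algebra_simps)
      have xin: "x \<in> normPolys_pos"
      proof -
        have "((\<lambda>t. poly P t * ?e t + \<epsilon> * (poly D t * ?e t)) has_integral (1 + \<epsilon> * 0)) {0..}"
          by (intro has_integral_add has_integral_mult_right Pint DI)
        then have "((\<lambda>t. poly x t * ?e t) has_integral 1) {0..}"
          by (simp add: x_def algebra_simps)
        moreover have "poly x t \<ge> 0" if "t \<ge> 0" for t
        proof -
          have Rt: "poly R t > 0" "poly R t \<ge> m" using R(2) m(2) that by auto
          have h1: "\<epsilon> * I * poly R t \<ge> 0" using ep(1) I0 Rt(1) by (intro mult_nonneg_nonneg) auto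
          have "(1 + \<epsilon> * I) * poly R t - \<epsilon> = (poly R t - \<epsilon>) + \<epsilon> * I * poly R t"
            by (simp add: algebra_simps)
          then have "(1 + \<epsilon> * I) * poly R t - \<epsilon> \<ge> 0" using h1 Rt(2) ep(2) by linarith
          then show ?thesis using px Bpos that by simp
        qed
        ultimately show ?thesis by (simp add: normPolys_pos_def normPolys_def)
      qed
      have yin: "y \<in> normPolys_pos"
      proof -
        have "((\<lambda>t. poly P t * ?e t - \<epsilon> * (poly D t * ?e t)) has_integral (1 - \<epsilon> * 0)) {0..}"
          by (intro has_integral_diff has_integral_mult_right Pint DI)
        then have "((\<lambda>t. poly y t * ?e t) has_integral 1) {0..}"
          by (simp add: y_def algebra_simps)
        moreover have "poly y t \<ge> 0" if "t \<ge> 0" for t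
        proof -
          have Rt: "poly R t > 0" using R(2) that by auto
          have "(1 - \<epsilon> * I) * poly R t \<ge> 0" using ep(3) Rt by (intro mult_nonneg_nonneg) auto
          then have "(1 - \<epsilon> * I) * poly R t + \<epsilon> \<ge> 0" using ep by simp
          then show ?thesis using py Bpos that by simp
        qed
        ultimately show ?thesis by (simp add: normPolys_pos_def normPolys_def)
      qed
      have "x + y = P + P" by (simp add: x_def y_def)
      moreover have "smult (1/2) (P + P) = smult (1/2 + 1/2) P" by (simp only: smult_add_right smult_add_left)
      ultimately have mid: "P = smult (1/2) (x + y)" by simp
      have "\<forall>x\<in>normPolys_pos. \<forall>y\<in>normPolys_pos. P = smult (1/2) (x + y) \<longrightarrow> x = P \<and> y = P"
        using ext unfolding is_extreme_point_def by (rule conjunct2)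
      then have "x = P" using xin yin mid by simp
      then have "smult \<epsilon> D = 0" by (simp add: x_def)
      then have D0: "D = 0" using ep by simp
      have "D = B * (smult I R - 1)" by (simp add: D_def PBR algebra_simps)
      moreover have "B \<noteq> 0" using P0 PBR by auto
      ultimately have "smult I R = 1" using D0 by simp
      then have "degree (smult I R) = 0" by simp
      then have "I = 0" using False by (auto split: if_splits)
      then show ?thesis using \<open>smult I R = 1\<close> by simp
    qed
  next
    assume "\<exists>(c::real) (k::nat) (l::nat) (lam::nat \<Rightarrow> real).
        c > 0 \<and> (\<forall>i<l. lam i > 0) \<and>
        P = smult c ([:0, 1:] ^ k * (\<Prod>i<l. [:- lam i, 1:] ^ 2))"
    then obtain c k and l :: nat and lam where c: "c > 0" "\<forall>i<l. lam i > 0"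
      and PB: "P = smult c ([:0, 1:] ^ k * (\<Prod>i<l. [:- lam i, 1:] ^ 2))" by blast
    define B where "B = [:0,1:]^k * (\<Prod>i<l. [:-lam i,1:]^2)"
    have PB': "P = smult c B" using PB B_def by simp
    have BI: "((\<lambda>t. poly B t * exp (-2 * t)) has_integral (1/c)) {0..}"
      by (rule scale_int[OF Pint PB']) (use c in simp)
    show "is_extreme_point normPolys_pos P"
      unfolding is_extreme_point_def
    proof (intro conjI ballI impI)
      show "P \<in> normPolys_pos" by (rule assms)
      fix x y assume xin: "x \<in> normPolys_pos" and yin: "y \<in> normPolys_pos"
        and mid: "P = smult (1/2) (x + y)"
      have xy: "x + y = smult 2 P" using mid by simp
      have bound: "\<forall>t>0. 0 \<le> poly x t \<and> poly x t \<le> poly ([:0,1:]^k * ((\<Prod>i<l. [:-lam i,1:]^2) * [:2*c:])) t"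
      proof (intro allI impI)
        fix t :: real assume t: "t > 0"
        have "poly x t \<ge> 0" "poly y t \<ge> 0" using xin yin t by (auto simp: normPolys_pos_def)
        moreover have "poly x t + poly y t = 2 * poly P t" using arg_cong[OF xy, of "\<lambda>p. poly p t"] by simp
        moreover have "poly ([:0,1:]^k * ((\<Prod>i<l. [:-lam i,1:]^2) * [:2*c:])) t = 2 * poly P t"
          using PB by simp
        ultimately show "0 \<le> poly x t \<and> poly x t \<le> poly ([:0,1:]^k * ((\<Prod>i<l. [:-lam i,1:]^2) * [:2*c:])) t"
          by linarith
      qed
      obtain x1 where x1: "x = [:0,1:]^k * x1"
          "\<forall>t>0. 0 \<le> poly x1 t \<and> poly x1 t \<le> poly ((\<Prod>i<l. [:-lam i,1:]^2) * [:2*c:]) t"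
        using D1[OF bound] by blast
      obtain x2 where x2: "x1 = (\<Prod>i<l. [:-lam i,1:]^2) * x2"
          "\<forall>t>0. 0 \<le> poly x2 t \<and> poly x2 t \<le> poly [:2*c:] t"
        using D2[OF c(2) x1(2)] by blast
      have "degree x2 = 0" using bounded_const[of x2 "2*c"] x2(2) by simp
      then have x2c: "x2 = [:coeff x2 0:]" using degree_0_id by metis
      define a where "a = coeff x2 0"
      have "x = B * [:a:]" using x1 x2 x2c unfolding B_def a_def by (simp only: mult.assoc)
      then have xB: "x = smult a B" by simp
      have "((\<lambda>t. poly x t * exp (-2 * t)) has_integral 1) {0..}"
        using xin by (simp add: normPolys_pos_def normPolys_def)
      moreover have "((\<lambda>t. poly x t * exp (-2 * t)) has_integral (a * (1/c))) {0..}"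
        using has_integral_mult_right[OF BI, of a] xB by (simp add: mult.assoc)
      ultimately have "a * (1/c) = 1" by (rule has_integral_unique[rotated])
      then have "a = c" using c by (simp add: field_simps)
      then show xP: "x = P" using xB PB B_def by simp
      have "y = smult 2 P - P" using xy xP by (metis add_diff_cancel_left')
      moreover have "smult (2-1) P = smult 2 P - P" by (simp only: smult_diff_left smult_1_left)
      ultimately show "y = P" by simp
    qed
  qed
qed


end
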